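(* In the GLM setting of the context, assume Conditions (C1)–(C2). Define, for $\lambda\ge0$, the asymptotic mean squared error $$\mathrm{aMSE}(\lambda)=d(\gamma_2)\,\mathrm{trace}\{\boldsymbol s^{-2}(\boldsymbol\beta_2;\lambda)\boldsymbol v_2(\boldsymbol\beta_2)\}+n_2\lambda^2n_1^{-2}\,\boldsymbol\Delta(\boldsymbol\beta_2)^\top\boldsymbol X_1^\top\boldsymbol s^{-2}(\boldsymbol\beta_2;\lambda)\boldsymbol X_1\boldsymbol\Delta(\boldsymbol\beta_2),$$ where $\boldsymbol s(\boldsymbol\beta;\lambda)=\boldsymbol v_2(\boldsymbol\beta)+\lambda\boldsymbol v_1(\boldsymbol\beta)$, so that $\mathrm{aMSE}(0)=d(\gamma_2)\mathrm{trace}\{\boldsymbol v_2^{-1}(\boldsymbol\beta_2)\}$ is the asymptotic MSE of the target MLE $\widehat{\boldsymbol\beta}_2$. Then: (i) for each $n_2$ there is $\lambda_0>0$ such that $\mathrm{aMSE}(\lambda)<\mathrm{aMSE}(0)$ for all $\lambda\in(0,\lambda_0)$; if $\boldsymbol X_1\boldsymbol\Delta(\boldsymbol\beta_2)=\boldsymbol 0$ this holds for all $\lambda>0$; (ii) if $\boldsymbol X_1\boldsymbol\Delta(\boldsymbol\beta_2)\neq\boldsymbol 0$, then, with $\boldsymbol v_1,\boldsymbol v_2,d(\gamma_2),\boldsymbol X_1,\boldsymbol\Delta(\boldsymbol\beta_2)$ held fixed, there is a constant $C$ such that for all sufficiently large $n_2$ every $\lambda>0$ with $\mathrm{aMSE}(\lambda)\le\mathrm{aMSE}(0)$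 satisfies $\lambda\le Cn_2^{-1/2}$; that is, the range of $\lambda>0$ on which the asymptotic MSE of $\widetilde{\boldsymbol\beta}_2(\lambda)$ is below that of $\widehat{\boldsymbol\beta}_2$ has upper limit $O(n_2^{-1/2})$.
   Context: GLM setting. Fix $p\ge1$, an open convex $\Theta\subseteq\mathbb{R}^p$, known $b,c,d$ with $b$ twice differentiable, $b''>0$, $h=b'$. Source (fixed): $n_1$, $\boldsymbol X_1=(\boldsymbol X_{11},\dots,\boldsymbol X_{n_11})\in\mathbb{R}^{p\times n_1}$, fixed $\widehat{\boldsymbol\beta}_1$. Target: deterministic $\boldsymbol X_{i2}$, $\boldsymbol X_2=(\boldsymbol X_{12},\dots,\boldsymbol X_{n_22})$, independent $y_{i2}$ with density $c(y;\gamma_2)\exp[d(\gamma_2)^{-1}\{y\boldsymbol X_{i2}^\top\boldsymbol\beta_2-b(\boldsymbol X_{i2}^\top\boldsymbol\beta_2)\}]$, true $\boldsymbol\beta_2\in\Theta$. Estimator $\widetilde{\boldsymbol\beta}_2(\lambda)=\arg\max_{\boldsymbol\beta}O(\boldsymbol\beta;\lambda)$ with $O(\boldsymbol\beta;\lambda)=n_2^{-1}\sum_{i=1}^{n_2}\{y_{i2}\boldsymbol X_{i2}^\top\boldsymbol\beta-b(\boldsymbol X_{i2}^\top\boldsymbol\beta)\}-\lambda n_1^{-1}\sum_{i=1}^{n_1}\{h(\boldsymbol X_{i1}^\top\widehat{\boldsymbol\beta}_1)(\boldsymbol X_{i1}^\top\widehat{\boldsymbol\beta}_1-\boldsymbol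 X_{i1}^\top\boldsymbol\beta)+b(\boldsymbol X_{i1}^\top\boldsymbol\beta)-b(\boldsymbol X_{i1}^\top\widehat{\boldsymbol\beta}_1)\}$; $\boldsymbol\beta_2^\star(\lambda)$ the unique maximizer of $\lim_{n_2\to\infty}\mathbb{E}O(\boldsymbol\beta;\lambda)$. Notation: $\boldsymbol A(\boldsymbol X_j^\top\boldsymbol\beta)=\mathrm{diag}\{b''(\boldsymbol X_{ij}^\top\boldsymbol\beta)\}_{i=1}^{n_j}$; $\boldsymbol\Delta(\boldsymbol\beta)=\{h(\boldsymbol X_{i1}^\top\boldsymbol\beta)-h(\boldsymbol X_{i1}^\top\widehat{\boldsymbol\beta}_1)\}_{i=1}^{n_1}$; $\boldsymbol v_1(\boldsymbol\beta)=n_1^{-1}\boldsymbol X_1\boldsymbol A(\boldsymbol X_1^\top\boldsymbol\beta)\boldsymbol X_1^\top$; $\boldsymbol v_2(\boldsymbol\beta)=\lim_{n_2\to\infty}n_2^{-1}\boldsymbol X_2\boldsymbol A(\boldsymbol X_2^\top\boldsymbol\beta)\boldsymbol X_2^\top$. Condition (C1): for each $\boldsymbol\beta$, $\lim_{n_2\to\infty}n_2^{-1}\sum_{i=1}^{n_2}\{h(\boldsymbol X_{i2}^\top\boldsymbol\beta_2)\boldsymbol X_{i2}^\top\boldsymbol\beta-b(\boldsymbol X_{i2}^\top\boldsymbol\beta)\}$ exists and is finite. Condition (C2): for every $\boldsymbol\beta$ between $\boldsymbol\beta_2$ and $\boldsymbol\beta_2^\star(\lambda)$ inclusive, $\boldsymbol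 v_1(\boldsymbol\beta)$ and $\boldsymbol v_2(\boldsymbol\beta)$ exist and are positive definite. *)

theory Defs
  imports "HOL-Analysis.Analysis"
begin

definition pos_def_mat :: "real^'p^'p \<Rightarrow> bool" where
  "pos_def_mat A \<longleftrightarrow> transpose A = A \<and> (\<forall>x. x \<noteq> 0 \<longrightarrow> x \<bullet> (A *v x) > 0)"

definition outer :: "real^'p \<Rightarrow> real^'p^'p" where
  "outer x = (\<chi> i j. x $ i * x $ j)"

text \<open>v1(beta) = n1^{-1} X1 A(X1^T beta) X1^T, source covariates X1 i, i < n1;
  b2 is the second derivative b''.\<close>
definition glm_v1 :: "(real \<Rightarrow> real) \<Rightarrow> nat \<Rightarrow> (nat \<Rightarrow> real^'p) \<Rightarrow> real^'p \<Rightarrow> real^'p^'p" where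
  "glm_v1 b2 n1 X1 \<beta> = (1 / real n1) *\<^sub>R (\<Sum>i<n1. b2 (X1 i \<bullet> \<beta>) *\<^sub>R outer (X1 i))"

definition glm_v2_seq :: "(real \<Rightarrow> real) \<Rightarrow> (nat \<Rightarrow> real^'p) \<Rightarrow> real^'p \<Rightarrow> nat \<Rightarrow> real^'p^'p" where
  "glm_v2_seq b2 X2 \<beta> n = (1 / real n) *\<^sub>R (\<Sum>i<n. b2 (X2 i \<bullet> \<beta>) *\<^sub>R outer (X2 i))"

text \<open>v2(beta) = lim_{n2 -> infinity} of the above (meaningful when the limit exists).\<close>
definition glm_v2 :: "(real \<Rightarrow> real) \<Rightarrow> (nat \<Rightarrow> real^'p) \<Rightarrow> real^'p \<Rightarrow> real^'p^'p" where
  "glm_v2 b2 X2 \<beta> = lim (glm_v2_seq b2 X2 \<beta>)"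

definition glm_X1Delta :: "(real \<Rightarrow> real) \<Rightarrow> nat \<Rightarrow> (nat \<Rightarrow> real^'p) \<Rightarrow> real^'p \<Rightarrow> real^'p \<Rightarrow> real^'p" where
  "glm_X1Delta h n1 X1 \<beta>hat1 \<beta> = (\<Sum>i<n1. (h (X1 i \<bullet> \<beta>) - h (X1 i \<bullet> \<beta>hat1)) *\<^sub>R X1 i)"

definition aMSE :: "real \<Rightarrow> real^'p^'p \<Rightarrow> real^'p^'p \<Rightarrow> real^'p \<Rightarrow> nat \<Rightarrow> nat \<Rightarrow> real \<Rightarrow> real" where
  "aMSE dg V1 V2 w n1 n2 lam =
     (let Si = matrix_inv (V2 + lam *\<^sub>R V1) in
      dg * trace (Si ** Si ** V2)
      + real n2 * lam\<^sup>2 / (real n1)\<^sup>2 * (w \<bullet> ((Si ** Si) *v w)))"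

end

theory Submission
  imports Defs
begin

lemma pd_sym:
  fixes A :: "real^'p^'p"
  assumes "pos_def_mat A" shows "x \<bullet> (A *v y) = (A *v x) \<bullet> y"
proof -
  have "transpose A = A" using assms by (simp add: pos_def_mat_def)
  then have "x v* A = A *v x" by (metis transpose_matrix_vector)
  then show ?thesis by (metis dot_lmul_matrix)
qed

lemma pd_inv:
  fixes A :: "real^'p^'p"
  assumes "pos_def_mat A"
  shows "A ** matrix_inv A = mat 1 \<and> matrix_inv A ** A = mat 1"
proof -
  have "\<forall>x. A *v x = 0 \<longrightarrow> x = 0"
    using assms unfolding pos_def_mat_def by (metis inner_zero_right less_irrefl)
  then have "\<exists>B. B ** A = mat 1" using matrix_left_invertible_ker by blast
  then have "invertible A" using invertible_left_inverse by blast
  then have "\<exists>A'. A ** A' = mat 1 \<and> A' ** A = mat 1" unfolding invertible_def .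
  then show ?thesis unfolding matrix_inv_def by (rule someI_ex)
qed

lemma pd_coercive:
  fixes A :: "real^'p^'p"
  assumes "pos_def_mat A"
  shows "\<exists>m>0. \<forall>x. m * (norm x)^2 \<le> x \<bullet> (A *v x)"
proof -
  have pos: "\<And>x. x \<noteq> 0 \<Longrightarrow> x \<bullet> (A *v x) > 0" using assms by (simp add: pos_def_mat_def)
  have cont: "continuous_on (sphere 0 1) (\<lambda>x. x \<bullet> (A *v x))"
    by (intro continuous_intros)
  have ne: "sphere (0::real^'p) 1 \<noteq> {}" by simp
  obtain y where y: "y \<in> sphere 0 1" and ymin: "\<And>x. x \<in> sphere 0 1 \<Longrightarrow> y \<bullet> (A *v y) \<le> x \<bullet> (A *v x)"
    using continuous_attains_inf[OF compact_sphere ne cont] by blast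
  have "y \<noteq> 0" using y by auto
  then have m: "y \<bullet> (A *v y) > 0" by (rule pos)
  show ?thesis
  proof (intro exI[of _ "y \<bullet> (A *v y)"] conjI allI m)
    fix x :: "real^'p"
    show "y \<bullet> (A *v y) * (norm x)^2 \<le> x \<bullet> (A *v x)"
    proof (cases "x = 0")
      case True then show ?thesis by simp
    next
      case False
      let ?z = "(1 / norm x) *\<^sub>R x"
      have "?z \<in> sphere 0 1" using False by simp
      then have "y \<bullet> (A *v y) \<le> ?z \<bullet> (A *v ?z)" by (rule ymin)
      also have "?z \<bullet> (A *v ?z) = (x \<bullet> (A *v x)) / (norm x)^2"
        by (simp add: matrix_vector_mult_scaleR power2_eq_square)
      finally show ?thesis using False by (simp add: field_simps)
    qed
  qed
qed

lemma mat_bound: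
  fixes A :: "real^'p^'p"
  shows "\<exists>K>0. \<forall>x. norm (A *v x) \<le> K * norm x"
  using bounded_linear.pos_bounded[OF matrix_vector_mul_bounded_linear[of A]]
  by (auto simp: mult.commute)

lemma pd_comb:
  fixes V1 V2 :: "real^'p^'p"
  assumes "pos_def_mat V1" "pos_def_mat V2" "lam \<ge> 0"
  shows "pos_def_mat (V2 + lam *\<^sub>R V1)"
proof -
  have t: "transpose (V2 + lam *\<^sub>R V1) = V2 + lam *\<^sub>R V1"
    using assms by (simp add: pos_def_mat_def transpose_scalar transpose_def vec_eq_iff)
  have "x \<bullet> ((V2 + lam *\<^sub>R V1) *v x) > 0" if "x \<noteq> 0" for x
  proof -
    have "x \<bullet> (V2 *v x) > 0" "x \<bullet> (V1 *v x) > 0" using assms that by (auto simp: pos_def_mat_def)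
    then show ?thesis using assms(3)
      by (simp add: matrix_vector_mult_add_rdistrib matrix_vector_mult_scaleR inner_add_right
          add_pos_nonneg scaleR_matrix_vector_assoc[symmetric])
  qed
  then show ?thesis using t by (simp add: pos_def_mat_def)
qed

lemma trace_quad:
  fixes M :: "real^'p^'p"
  shows "trace M = (\<Sum>i\<in>UNIV. axis i 1 \<bullet> (M *v axis i 1))"
proof -
  have "axis i 1 \<bullet> (M *v axis i 1) = M$i$i" for i
    unfolding inner_axis' by (simp add: matrix_vector_mult_def axis_def if_distrib[of "\<lambda>t. _ * t"] cong: if_cong)
  then show ?thesis unfolding trace_def by simp
qed

lemma S_norm:
  fixes V1 V2 :: "real^'p^'p"
  assumes "lam \<ge> 0" "\<forall>x. norm (V1 *v x) \<le> K1 * norm x" "\<forall>x. norm (V2 *v x) \<le> K2 * norm x"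
  shows "norm ((V2 + lam *\<^sub>R V1) *v u) \<le> (K2 + lam * K1) * norm u"
proof -
  have "norm ((V2 + lam *\<^sub>R V1) *v u) = norm (V2 *v u + lam *\<^sub>R (V1 *v u))"
    by (simp add: matrix_vector_mult_add_rdistrib scaleR_matrix_vector_assoc)
  also have "\<dots> \<le> norm (V2 *v u) + lam * norm (V1 *v u)"
    using norm_triangle_ineq[of "V2 *v u" "lam *\<^sub>R (V1 *v u)"] assms(1) by simp
  also have "\<dots> \<le> K2 * norm u + lam * (K1 * norm u)"
    using assms by (intro add_mono mult_left_mono) auto
  finally show ?thesis by (simp add: algebra_simps)
qed

lemma lam_facts:
  fixes V1 V2 :: "real^'p^'p" and w :: "real^'p"
  assumes pd1: "pos_def_mat V1" and pd2: "pos_def_mat V2" and lam: "lam \<ge> 0"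
    and m1: "m1 > 0" "\<forall>x. m1 * (norm x)^2 \<le> x \<bullet> (V1 *v x)"
    and m2: "m2 > 0" "\<forall>x. m2 * (norm x)^2 \<le> x \<bullet> (V2 *v x)"
    and K1: "K1 > 0" "\<forall>x. norm (V1 *v x) \<le> K1 * norm x"
    and K2: "K2 > 0" "\<forall>x. norm (V2 *v x) \<le> K2 * norm x"
  shows "trace (matrix_inv V2) - trace (matrix_inv (V2 + lam *\<^sub>R V1) ** matrix_inv (V2 + lam *\<^sub>R V1) ** V2)
           \<ge> 2 * lam * m1 / (K2 + lam * K1)^2"
    and "trace (matrix_inv (V2 + lam *\<^sub>R V1) ** matrix_inv (V2 + lam *\<^sub>R V1) ** V2) \<ge> 0"
    and "w \<bullet> ((matrix_inv (V2 + lam *\<^sub>R V1) ** matrix_inv (V2 + lam *\<^sub>R V1)) *v w) \<le> (norm w)^2 / m2^2"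
    and "(norm w)^2 \<le> (w \<bullet> ((matrix_inv (V2 + lam *\<^sub>R V1) ** matrix_inv (V2 + lam *\<^sub>R V1)) *v w)) * (K2 + lam * K1)^2"
proof -
  define S where "S = V2 + lam *\<^sub>R V1"
  define T where "T = matrix_inv S"
  define P where "P = matrix_inv V2"
  have pdS: "pos_def_mat S" unfolding S_def using pd_comb[OF pd1 pd2 lam] .
  have ST: "\<And>x. S *v (T *v x) = x" "\<And>x. T *v (S *v x) = x"
    using pd_inv[OF pdS] unfolding T_def by (metis matrix_vector_mul_assoc matrix_vector_mul_lid)+
  have VP: "\<And>x. V2 *v (P *v x) = x"
    using pd_inv[OF pd2] unfolding P_def by (metis matrix_vector_mul_assoc matrix_vector_mul_lid)
  have Su: "S *v u = V2 *v u + lam *\<^sub>R (V1 *v u)" for u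
    unfolding S_def by (simp add: matrix_vector_mult_add_rdistrib scaleR_matrix_vector_assoc)
  have Snorm: "norm (S *v u) \<le> (K2 + lam * K1) * norm u" for u
    unfolding S_def using S_norm[OF lam K1(2) K2(2)] .
  have KK: "K2 + lam * K1 > 0" using K1 K2 lam by (simp add: add_pos_nonneg)
  have q1: "u \<bullet> (V1 *v u) \<ge> 0" for u using m1 by (metis mult_nonneg_nonneg less_imp_le zero_le_power2 order_trans)
  have q2: "u \<bullet> (V2 *v u) \<ge> 0" for u using m2 by (metis mult_nonneg_nonneg less_imp_le zero_le_power2 order_trans)
  have trT: "trace (T ** T ** V2) = (\<Sum>i\<in>UNIV. (T *v axis i 1) \<bullet> (V2 *v (T *v axis i 1)))"
  proof -
    have "trace (T ** T ** V2) = trace (T ** V2 ** T)"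
      by (metis matrix_mul_assoc trace_mul_sym)
    also have "\<dots> = (\<Sum>i\<in>UNIV. (T *v axis i 1) \<bullet> (V2 *v (T *v axis i 1)))"
      unfolding trace_quad
    proof (rule sum.cong[OF refl])
      fix i :: 'p
      define u where "u = T *v axis i 1"
      have e: "axis i 1 = S *v u" unfolding u_def using ST(1) by simp
      have "axis i 1 \<bullet> ((T ** V2 ** T) *v axis i 1) = (S *v u) \<bullet> (T *v (V2 *v u))"
        by (simp add: e[symmetric] u_def matrix_vector_mul_assoc[symmetric] ST(1))
      also have "\<dots> = u \<bullet> (S *v (T *v (V2 *v u)))" using pd_sym[OF pdS] by simp
      also have "\<dots> = u \<bullet> (V2 *v u)" using ST(1) by simp
      finally show "axis i 1 \<bullet> ((T ** V2 ** T) *v axis i 1) = (T *v axis i 1) \<bullet> (V2 *v (T *v axis i 1))"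
        unfolding u_def .
    qed
    finally show ?thesis .
  qed
  have trP: "trace P = (\<Sum>i\<in>UNIV. (P *v axis i 1) \<bullet> (V2 *v (P *v axis i 1)))"
    unfolding trace_quad
  proof (rule sum.cong[OF refl])
    fix i :: 'p
    have "axis i 1 \<bullet> (P *v axis i 1) = (V2 *v (P *v axis i 1)) \<bullet> (P *v axis i 1)" using VP by simp
    then show "axis i 1 \<bullet> (P *v axis i 1) = (P *v axis i 1) \<bullet> (V2 *v (P *v axis i 1))"
      by (simp add: inner_commute)
  qed
  have per: "(P *v axis i 1) \<bullet> (V2 *v (P *v axis i 1)) - (T *v axis i 1) \<bullet> (V2 *v (T *v axis i 1))
      \<ge> 2 * lam * m1 / (K2 + lam * K1)^2" for i
  proof -
    define u where "u = T *v axis i 1"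
    define p where "p = P *v axis i 1"
    have eS: "S *v u = axis i 1" unfolding u_def using ST(1) by simp
    have eP: "V2 *v p = axis i 1" unfolding p_def using VP by simp
    have a: "(p - u) \<bullet> (V2 *v (p - u)) \<ge> 0" by (rule q2)
    have sym: "p \<bullet> (V2 *v u) = u \<bullet> (V2 *v p)" using pd_sym[OF pd2, of p u] by (simp add: inner_commute)
    have b: "u \<bullet> (V2 *v p) = u \<bullet> (V2 *v u) + lam * (u \<bullet> (V1 *v u))"
    proof -
      have "u \<bullet> (V2 *v p) = u \<bullet> (V2 *v u + lam *\<^sub>R (V1 *v u))" using eS eP Su[of u] by metis
      then show ?thesis by (simp add: inner_add_right)
    qed
    have c: "(p - u) \<bullet> (V2 *v (p - u)) = p \<bullet> (V2 *v p) - p \<bullet> (V2 *v u) - u \<bullet> (V2 *v p) + u \<bullet> (V2 *v u)"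
      by (simp add: matrix_vector_mult_diff_distrib inner_diff_left inner_diff_right algebra_simps)
    have d: "p \<bullet> (V2 *v p) - u \<bullet> (V2 *v u) \<ge> 2 * lam * (u \<bullet> (V1 *v u))"
      using a b c sym by linarith
    have "1 \<le> (K2 + lam * K1) * norm u" using Snorm[of u] eS by simp
    then have nu: "1 / (K2 + lam * K1)^2 \<le> (norm u)^2"
    proof -
      have "1 / (K2 + lam * K1) \<le> norm u" using KK \<open>1 \<le> _\<close> by (simp add: divide_le_eq mult.commute)
      then have "(1 / (K2 + lam * K1))^2 \<le> (norm u)^2" using KK by (intro power_mono) auto
      then show ?thesis by (simp add: power_divide)
    qed
    have "2 * lam * m1 / (K2 + lam * K1)^2 = 2 * lam * m1 * (1 / (K2 + lam * K1)^2)" by simp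
    also have "\<dots> \<le> 2 * lam * m1 * (norm u)^2" using nu lam m1 by (intro mult_left_mono) auto
    also have "\<dots> \<le> 2 * lam * (u \<bullet> (V1 *v u))" using m1(2) lam by (simp add: mult.assoc mult_left_mono)
    finally show ?thesis using d unfolding u_def p_def by linarith
  qed
  obtain i0 :: 'p where True by blast
  have "trace P - trace (T ** T ** V2) = (\<Sum>i\<in>UNIV. (P *v axis i 1) \<bullet> (V2 *v (P *v axis i 1)) - (T *v axis i 1) \<bullet> (V2 *v (T *v axis i 1)))"
    unfolding trP trT by (simp add: sum_subtractf)
  also have "\<dots> \<ge> (P *v axis i0 1) \<bullet> (V2 *v (P *v axis i0 1)) - (T *v axis i0 1) \<bullet> (V2 *v (T *v axis i0 1))"
  proof (rule member_le_sum)
    fix i assume "i \<in> UNIV - {i0}"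
    have "0 \<le> 2 * lam * m1 / (K2 + lam * K1)^2" using lam m1 by simp
    then show "0 \<le> (P *v axis i 1) \<bullet> (V2 *v (P *v axis i 1)) - (T *v axis i 1) \<bullet> (V2 *v (T *v axis i 1))"
      using per[of i] by linarith
  qed auto
  finally show "trace (matrix_inv V2) - trace (matrix_inv (V2 + lam *\<^sub>R V1) ** matrix_inv (V2 + lam *\<^sub>R V1) ** V2)
           \<ge> 2 * lam * m1 / (K2 + lam * K1)^2"
    using per[of i0] unfolding P_def T_def S_def by linarith
  show "trace (matrix_inv (V2 + lam *\<^sub>R V1) ** matrix_inv (V2 + lam *\<^sub>R V1) ** V2) \<ge> 0"
    using trT q2 unfolding T_def S_def by (simp add: sum_nonneg)
  define u where "u = T *v w"
  have wS: "S *v u = w" unfolding u_def using ST(1) by simp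
  have qw: "w \<bullet> ((T ** T) *v w) = u \<bullet> u"
  proof -
    have "w \<bullet> ((T ** T) *v w) = (S *v u) \<bullet> (T *v u)"
      by (simp add: wS u_def matrix_vector_mul_assoc[symmetric] ST(1))
    also have "\<dots> = u \<bullet> (S *v (T *v u))" using pd_sym[OF pdS] by simp
    finally show ?thesis using ST(1) by simp
  qed
  have "m2 * (norm u)^2 \<le> u \<bullet> (S *v u)"
    using m2(2)[rule_format, of u] q1[of u] lam Su[of u]
    by (simp add: inner_add_right) (meson add_increasing2 mult_nonneg_nonneg order_trans)
  also have "\<dots> \<le> norm u * norm w" using wS Cauchy_Schwarz_ineq2[of u w] by simp
  finally have "m2 * norm u * norm u \<le> norm w * norm u" by (simp add: power2_eq_square algebra_simps)
  then have mu: "m2 * norm u \<le> norm w"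
    by (cases "norm u = 0") (auto simp: mult_le_cancel_right)
  then have "(m2 * norm u)^2 \<le> (norm w)^2" using m2 by (intro power_mono) auto
  then have "(norm u)^2 \<le> (norm w)^2 / m2^2" using m2 by (simp add: field_simps power_mult_distrib)
  then show "w \<bullet> ((matrix_inv (V2 + lam *\<^sub>R V1) ** matrix_inv (V2 + lam *\<^sub>R V1)) *v w) \<le> (norm w)^2 / m2^2"
    using qw unfolding T_def S_def by (simp add: power2_norm_eq_inner)
  have "norm w \<le> (K2 + lam * K1) * norm u" using Snorm[of u] wS by simp
  then have "(norm w)^2 \<le> ((K2 + lam * K1) * norm u)^2" by (intro power_mono) auto
  then show "(norm w)^2 \<le> (w \<bullet> ((matrix_inv (V2 + lam *\<^sub>R V1) ** matrix_inv (V2 + lam *\<^sub>R V1)) *v w)) * (K2 + lam * K1)^2"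
    using qw unfolding T_def S_def by (simp add: power2_norm_eq_inner power_mult_distrib mult.commute)
qed

lemma main_abs:
  fixes V1 V2 :: "real^'p^'p" and w :: "real^'p"
  assumes pd1: "pos_def_mat V1" and pd2: "pos_def_mat V2" and dg: "dg > 0" and n1: "n1 > 0"
  shows
    "(\<forall>n2. \<exists>lam0>0. \<forall>lam. 0 < lam \<and> lam < lam0 \<longrightarrow>
        aMSE dg V1 V2 w n1 n2 lam < aMSE dg V1 V2 w n1 n2 0)
   \<and> (w = 0 \<longrightarrow> (\<forall>n2. \<forall>lam>0. aMSE dg V1 V2 w n1 n2 lam < aMSE dg V1 V2 w n1 n2 0))
   \<and> (w \<noteq> 0 \<longrightarrow> (\<exists>C. \<exists>N. \<forall>n2\<ge>N. \<forall>lam>0.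
        aMSE dg V1 V2 w n1 n2 lam \<le> aMSE dg V1 V2 w n1 n2 0 \<longrightarrow> lam \<le> C / sqrt (real n2)))"
proof -
  obtain m1 where m1: "m1 > 0" "\<forall>x. m1 * (norm x)^2 \<le> x \<bullet> (V1 *v x)" using pd_coercive[OF pd1] by blast
  obtain m2 where m2: "m2 > 0" "\<forall>x. m2 * (norm x)^2 \<le> x \<bullet> (V2 *v x)" using pd_coercive[OF pd2] by blast
  obtain K1 where K1: "K1 > 0" "\<forall>x. norm (V1 *v x) \<le> K1 * norm x" using mat_bound by blast
  obtain K2 where K2: "K2 > 0" "\<forall>x. norm (V2 *v x) \<le> K2 * norm x" using mat_bound by blast
  define tr where "tr lam = trace (matrix_inv (V2 + lam *\<^sub>R V1) ** matrix_inv (V2 + lam *\<^sub>R V1) ** V2)" for lam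
  define q where "q lam = w \<bullet> ((matrix_inv (V2 + lam *\<^sub>R V1) ** matrix_inv (V2 + lam *\<^sub>R V1)) *v w)" for lam
  define tP where "tP = trace (matrix_inv V2)"
  note LF = lam_facts[OF pd1 pd2 _ m1 m2 K1 K2, folded tr_def q_def tP_def]
  have F: "aMSE dg V1 V2 w n1 n2 lam = dg * tr lam + real n2 * lam\<^sup>2 / (real n1)\<^sup>2 * q lam" for n2 lam
    unfolding aMSE_def tr_def q_def Let_def by simp
  have F0: "aMSE dg V1 V2 w n1 n2 0 = dg * tP" for n2
  proof -
    have "tr 0 = tP"
    proof -
      have "matrix_inv V2 ** V2 = mat 1" using pd_inv[OF pd2] by simp
      then have "matrix_inv V2 ** matrix_inv V2 ** V2 = matrix_inv V2"
        by (metis matrix_mul_assoc matrix_mul_rid)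
      then show ?thesis unfolding tr_def tP_def by simp
    qed
    then show ?thesis using F[of n2 0] by simp
  qed
  have gap: "tP - tr lam \<ge> 2 * lam * m1 / (K2 + lam * K1)^2" if "lam \<ge> 0" for lam
    using LF(1)[OF that] .
  have part1: "\<exists>lam0>0. \<forall>lam. 0 < lam \<and> lam < lam0 \<longrightarrow>
        aMSE dg V1 V2 w n1 n2 lam < aMSE dg V1 V2 w n1 n2 0" for n2
  proof -
    define a where "a = dg * (2 * m1 / (K2 + K1)^2)"
    define c where "c = real n2 / (real n1)\<^sup>2 * ((norm w)^2 / m2^2)"
    have a: "a > 0" unfolding a_def using dg m1 K1 K2 by simp
    have c: "c \<ge> 0" unfolding c_def by simp
    define lam0 where "lam0 = min 1 (a / (c + 1))"
    have l0: "lam0 > 0" unfolding lam0_def using a c by simp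
    show ?thesis
    proof (intro exI[of _ lam0] conjI allI impI l0)
      fix lam assume lam: "0 < lam \<and> lam < lam0"
      then have l1: "lam \<le> 1" and lp: "lam > 0" unfolding lam0_def by auto
      have "lam * c < a"
      proof -
        have "lam * c \<le> a / (c + 1) * c" using lam c unfolding lam0_def by (intro mult_right_mono) auto
        also have "\<dots> < a" using a c by (simp add: field_simps)
        finally show ?thesis .
      qed
      have KKp: "K2 + lam * K1 > 0" using K1 K2 lp by (simp add: add_pos_pos)
      have "(K2 + lam * K1)^2 \<le> (K2 + K1)^2" using l1 lp K1 K2
        by (intro power_mono) (auto simp: mult_le_cancel_right1 less_imp_le)
      then have "2 * m1 / (K2 + K1)^2 \<le> 2 * m1 / (K2 + lam * K1)^2"
        using m1 K1 K2 lp KKp by (intro divide_left_mono) (auto intro!: mult_pos_pos)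
      then have "lam * a \<le> dg * (2 * lam * m1 / (K2 + lam * K1)^2)"
      proof -
        have "lam * a = (dg * lam) * (2 * m1 / (K2 + K1)^2)" unfolding a_def by simp
        also have "\<dots> \<le> (dg * lam) * (2 * m1 / (K2 + lam * K1)^2)"
          using \<open>2 * m1 / (K2 + K1)^2 \<le> _\<close> lp dg by (intro mult_left_mono) auto
        also have "\<dots> = dg * (2 * lam * m1 / (K2 + lam * K1)^2)" by simp
        finally show ?thesis .
      qed
      also have "\<dots> \<le> dg * (tP - tr lam)" using gap[of lam] lp dg by (intro mult_left_mono) auto
      finally have g: "lam * a \<le> dg * (tP - tr lam)" .
      have "real n2 * lam\<^sup>2 / (real n1)\<^sup>2 * q lam \<le> real n2 * lam\<^sup>2 / (real n1)\<^sup>2 * ((norm w)^2 / m2^2)"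
        using LF(3)[of lam w] lp unfolding q_def by (intro mult_left_mono) auto
      also have "\<dots> = lam * (lam * c)" unfolding c_def by (simp add: power2_eq_square)
      also have "\<dots> < lam * a" using \<open>lam * c < a\<close> lp by simp
      finally have "real n2 * lam\<^sup>2 / (real n1)\<^sup>2 * q lam < lam * a" .
      then show "aMSE dg V1 V2 w n1 n2 lam < aMSE dg V1 V2 w n1 n2 0"
        unfolding F0 unfolding F using g by (simp add: algebra_simps)
    qed
  qed
  have part2: "aMSE dg V1 V2 w n1 n2 lam < aMSE dg V1 V2 w n1 n2 0" if "w = 0" "lam > 0" for n2 lam
  proof -
    have "q lam = 0" unfolding q_def using that by simp
    have "K2 + lam * K1 > 0" using that K1 K2 by (simp add: add_pos_pos)
    then have "0 < 2 * lam * m1 / (K2 + lam * K1)^2" using that m1 by simp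
    then have "0 < dg * (tP - tr lam)" using gap[of lam] that dg by simp
    then show ?thesis unfolding F0 unfolding F using \<open>q lam = 0\<close> by (simp add: algebra_simps)
  qed
  have part3: "\<exists>C. \<exists>N. \<forall>n2\<ge>N. \<forall>lam>0.
        aMSE dg V1 V2 w n1 n2 lam \<le> aMSE dg V1 V2 w n1 n2 0 \<longrightarrow> lam \<le> C / sqrt (real n2)"
    if w: "w \<noteq> 0"
  proof -
    have tP0: "tP \<ge> 0" using gap[of 0] LF(2)[of 0] by simp
    define A where "A = sqrt (dg * tP * (real n1)^2)"
    have A0: "A \<ge> 0" unfolding A_def using dg tP0 by simp
    define nw where "nw = norm w"
    have nw: "nw > 0" using w unfolding nw_def by simp
    define C where "C = 2 * A * K2 / nw"
    define N where "N = nat \<lceil>(2 * A * K1 / nw)^2\<rceil> + 1"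
    show ?thesis
    proof (intro exI[of _ C] exI[of _ N] allI impI)
      fix n2 :: nat and lam :: real
      assume n2: "N \<le> n2" and lp: "0 < lam" and le: "aMSE dg V1 V2 w n1 n2 lam \<le> aMSE dg V1 V2 w n1 n2 0"
      have n2p: "real n2 > 0" using n2 unfolding N_def by simp
      have "(2 * A * K1 / nw)^2 \<le> real n2" using n2 unfolding N_def by linarith
      then have sq: "2 * A * K1 / nw \<le> sqrt (real n2)" by (metis real_le_rsqrt)
      have "real n2 * lam\<^sup>2 / (real n1)\<^sup>2 * q lam \<le> dg * (tP - tr lam)"
        using le unfolding F0 unfolding F by (simp add: algebra_simps)
      also have "\<dots> \<le> dg * tP" using LF(2)[of lam] lp dg by (simp add: algebra_simps)
      finally have h1: "real n2 * lam\<^sup>2 / (real n1)\<^sup>2 * q lam \<le> dg * tP" .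
      have KK: "K2 + lam * K1 > 0" using K1 K2 lp by (simp add: add_pos_nonneg)
      have "real n2 * lam\<^sup>2 * nw^2 \<le> real n2 * lam\<^sup>2 * (q lam * (K2 + lam * K1)^2)"
        using LF(4)[of lam w] lp unfolding nw_def q_def by (intro mult_left_mono) auto
      also have "\<dots> = (real n2 * lam\<^sup>2 / (real n1)\<^sup>2 * q lam) * (real n1)^2 * (K2 + lam * K1)^2"
        using n1 by (simp add: field_simps)
      also have "\<dots> \<le> dg * tP * (real n1)^2 * (K2 + lam * K1)^2"
        using h1 by (intro mult_right_mono) auto
      finally have h2: "(sqrt (real n2) * lam * nw)^2 \<le> (A * (K2 + lam * K1))^2"
        unfolding A_def using dg tP0 by (simp add: power_mult_distrib)
      have h3: "sqrt (real n2) * lam * nw \<le> A * (K2 + lam * K1)"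
        using power2_le_imp_le[OF h2] A0 KK by simp
      have "lam * (A * K1) \<le> lam * (sqrt (real n2) * nw / 2)"
        using sq nw lp by (intro mult_left_mono) (auto simp: field_simps)
      then have "sqrt (real n2) * lam * nw \<le> 2 * A * K2" using h3 by (simp add: algebra_simps)
      then show "lam \<le> C / sqrt (real n2)"
        unfolding C_def using n2p nw by (simp add: field_simps)
    qed
  qed
  show ?thesis using part1 part2 part3 by blast
qed


theorem theorem2:
  fixes b h b2 :: "real \<Rightarrow> real"
    and d :: "'g \<Rightarrow> real" and \<gamma>2 :: 'g
    and \<Theta> :: "(real^'p) set"
    and n1 :: nat and X1 :: "nat \<Rightarrow> real^'p" and \<beta>hat1 :: "real^'p"
    and X2 :: "nat \<Rightarrow> real^'p" and \<beta>2 :: "real^'p"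
  assumes \<Theta>: "open \<Theta>" "convex \<Theta>" "\<beta>2 \<in> \<Theta>"
    and b_deriv: "\<And>x. (b has_real_derivative h x) (at x)"
    and h_deriv: "\<And>x. (h has_real_derivative b2 x) (at x)"
    and b2_pos: "\<And>x. b2 x > 0"
    and d_pos: "d \<gamma>2 > 0"
    and n1_pos: "n1 > 0"
    and C1: "\<And>\<beta>. convergent (\<lambda>n. (1 / real n) *
               (\<Sum>i<n. h (X2 i \<bullet> \<beta>2) * (X2 i \<bullet> \<beta>) - b (X2 i \<bullet> \<beta>)))"
    and C2_v1: "pos_def_mat (glm_v1 b2 n1 X1 \<beta>2)"
    and C2_v2_exists: "convergent (glm_v2_seq b2 X2 \<beta>2)"
    and C2_v2: "pos_def_mat (glm_v2 b2 X2 \<beta>2)"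
  shows
    "(\<forall>n2. \<exists>lam0>0. \<forall>lam. 0 < lam \<and> lam < lam0 \<longrightarrow>
        aMSE (d \<gamma>2) (glm_v1 b2 n1 X1 \<beta>2) (glm_v2 b2 X2 \<beta>2) (glm_X1Delta h n1 X1 \<beta>hat1 \<beta>2) n1 n2 lam
      < aMSE (d \<gamma>2) (glm_v1 b2 n1 X1 \<beta>2) (glm_v2 b2 X2 \<beta>2) (glm_X1Delta h n1 X1 \<beta>hat1 \<beta>2) n1 n2 0)
   \<and> (glm_X1Delta h n1 X1 \<beta>hat1 \<beta>2 = 0 \<longrightarrow> (\<forall>n2. \<forall>lam>0.
        aMSE (d \<gamma>2) (glm_v1 b2 n1 X1 \<beta>2) (glm_v2 b2 X2 \<beta>2) (glm_X1Delta h n1 X1 \<beta>hat1 \<beta>2) n1 n2 lam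
      < aMSE (d \<gamma>2) (glm_v1 b2 n1 X1 \<beta>2) (glm_v2 b2 X2 \<beta>2) (glm_X1Delta h n1 X1 \<beta>hat1 \<beta>2) n1 n2 0))
   \<and> (glm_X1Delta h n1 X1 \<beta>hat1 \<beta>2 \<noteq> 0 \<longrightarrow> (\<exists>C. \<exists>N. \<forall>n2\<ge>N. \<forall>lam>0.
        aMSE (d \<gamma>2) (glm_v1 b2 n1 X1 \<beta>2) (glm_v2 b2 X2 \<beta>2) (glm_X1Delta h n1 X1 \<beta>hat1 \<beta>2) n1 n2 lam
      \<le> aMSE (d \<gamma>2) (glm_v1 b2 n1 X1 \<beta>2) (glm_v2 b2 X2 \<beta>2) (glm_X1Delta h n1 X1 \<beta>hat1 \<beta>2) n1 n2 0
        \<longrightarrow> lam \<le> C / sqrt (real n2)))"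
  using main_abs[OF C2_v1 C2_v2 d_pos n1_pos] by blast

end
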